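(* Assume (L): for any $\delta,\varepsilon>0$ and compact $K\subset E$ there are $N>0$, $p>0$ such that for all $n\ge N$ and $x\in K$, $\mathbb P^x\{|\frac1{n\delta}\int_0^{n\delta}f(X_s)ds-\mu(f)|>\varepsilon\}\le e^{-pn\delta}$. Then for any $\varepsilon>0$ and compact $K\subset E$ there are $S>0$, $C>0$, $\rho>0$ such that for all $t\ge S$ and $x\in K$, $$\mathbb P^x\Big\{\sup_{s\ge t}\Big|\frac1s\int_0^sf(X_u)du-\mu(f)\Big|>\varepsilon\Big\}\le Ce^{-\rho t}.$$
   Context: $E$ is a locally compact separable metric space in which every closed ball is compact. $(X_t)$ is a right-continuous time-homogeneous (standard) Markov process on $E$ with laws $\mathbb P^x$, satisfying the weak Feller property and ergodicity (a unique probability measure $\mu$ with $\|P_t(x,\cdot)-\mu\|_{TV}\to0$ for all $x$, $P_t(x,\cdot)$ the transition probabilities); $\mu(f)=\int f\,d\mu$. $f:E\to\mathbb R$ is continuous and bounded. *)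

theory Defs
  imports "HOL-Probability.Probability"
begin

definition trans_prob :: "('e::metric_space \<Rightarrow> 'w measure) \<Rightarrow> ('w \<Rightarrow> real \<Rightarrow> 'e) \<Rightarrow> 'e \<Rightarrow> real \<Rightarrow> 'e measure"
  where "trans_prob P X y t = distr (P y) borel (\<lambda>\<omega>. X \<omega> t)"

definition nat_filtration :: "'w measure \<Rightarrow> ('w \<Rightarrow> real \<Rightarrow> 'e::metric_space) \<Rightarrow> real \<Rightarrow> 'w measure"
  where "nat_filtration M X t =
     sigma (space M) (\<Union>u\<in>{0..t}. {(\<lambda>\<omega>. X \<omega> u) -` B \<inter> space M | B. B \<in> sets borel})"

definition tv_dist :: "'e::metric_space measure \<Rightarrow> 'e measure \<Rightarrow> real"
  where "tv_dist M N = (SUP A\<in>sets (borel::'e measure). \<bar>measure M A - measure N A\<bar>)"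

definition rc_markov_process :: "'w measure \<Rightarrow> ('e::metric_space \<Rightarrow> 'w measure) \<Rightarrow> ('w \<Rightarrow> real \<Rightarrow> 'e) \<Rightarrow> bool"
  where "rc_markov_process M P X \<longleftrightarrow>
     (\<forall>x. prob_space (P x) \<and> sets (P x) = sets M \<and> space (P x) = space M) \<and>
     (\<forall>t\<ge>0. (\<lambda>\<omega>. X \<omega> t) \<in> measurable M borel) \<and>
     (\<forall>\<omega>\<in>space M. \<forall>t\<ge>0. continuous (at_right t) (X \<omega>)) \<and>
     (\<forall>x. AE \<omega> in P x. X \<omega> 0 = x) \<and>
     (\<forall>t\<ge>0. \<forall>A\<in>sets borel. (\<lambda>y. measure (trans_prob P X y t) A) \<in> borel_measurable borel) \<and>
     (\<forall>x s t (g::'e \<Rightarrow> real). s \<ge> 0 \<longrightarrow> t \<ge> 0 \<longrightarrow> g \<in> borel_measurable borel \<longrightarrow> bounded (range g) \<longrightarrow>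
        (\<forall>A\<in>sets (nat_filtration M X t).
           (\<integral>\<omega>. indicator A \<omega> * g (X \<omega> (t + s)) \<partial>P x) =
           (\<integral>\<omega>. indicator A \<omega> * (\<integral>y. g y \<partial>trans_prob P X (X \<omega> t) s) \<partial>P x)))"

definition weak_feller :: "('e::metric_space \<Rightarrow> 'w measure) \<Rightarrow> ('w \<Rightarrow> real \<Rightarrow> 'e) \<Rightarrow> bool"
  where "weak_feller P X \<longleftrightarrow>
     (\<forall>t\<ge>0. \<forall>g::'e \<Rightarrow> real. continuous_on UNIV g \<longrightarrow> bounded (range g) \<longrightarrow>
        continuous_on UNIV (\<lambda>y. \<integral>z. g z \<partial>trans_prob P X y t))"

definition tv_limit_measure :: "('e::metric_space \<Rightarrow> 'w measure) \<Rightarrow> ('w \<Rightarrow> real \<Rightarrow> 'e) \<Rightarrow> 'e measure \<Rightarrow> bool"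
  where "tv_limit_measure P X \<mu> \<longleftrightarrow> prob_space \<mu> \<and> sets \<mu> = sets borel \<and>
     (\<forall>x. ((\<lambda>t. tv_dist (trans_prob P X x t) \<mu>) \<longlongrightarrow> 0) at_top)"

definition ergodic_with :: "('e::metric_space \<Rightarrow> 'w measure) \<Rightarrow> ('w \<Rightarrow> real \<Rightarrow> 'e) \<Rightarrow> 'e measure \<Rightarrow> bool"
  where "ergodic_with P X \<mu> \<longleftrightarrow> tv_limit_measure P X \<mu> \<and>
     (\<forall>\<nu>. tv_limit_measure P X \<nu> \<longrightarrow> \<nu> = \<mu>)"

definition time_avg :: "('w \<Rightarrow> real \<Rightarrow> 'e) \<Rightarrow> ('e \<Rightarrow> real) \<Rightarrow> 'w \<Rightarrow> real \<Rightarrow> real"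
  where "time_avg X f \<omega> s = (1 / s) * (LINT u:{0..s}|lborel. f (X \<omega> u))"

end

theory Submission imports Defs begin
lemma set_int_bound:
  fixes g :: "real \<Rightarrow> real"
  assumes g: "g \<in> borel_measurable borel" and B: "\<And>u. \<bar>g u\<bar> \<le> B" and A: "A \<in> sets borel"
   and fin: "emeasure lborel A < \<infinity>"
  shows "set_integrable lborel A g" "\<bar>LINT u:A|lborel. g u\<bar> \<le> B * measure lborel A"
proof -
  have B0: "0 \<le> B" using B[of 0] by linarith
  have ii: "integrable lborel (indicator A :: real \<Rightarrow> real)"
    using A fin by (simp add: less_top)
  hence ii2: "integrable lborel (\<lambda>x. B * indicator A x :: real)" by simp
  have m: "(\<lambda>x. indicator A x *\<^sub>R g x) \<in> borel_measurable lborel" using g A by simp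
  have le: "\<And>x. norm (indicator A x *\<^sub>R g x) \<le> norm (B * indicator A x)"
  proof -
    fix x have "0 \<le> B" using B[of 0] by linarith
    thus "norm (indicator A x *\<^sub>R g x) \<le> norm (B * indicator A x)"
      using B[of x] by (simp add: indicator_def)
  qed
  show si: "set_integrable lborel A g"
    unfolding set_integrable_def
    by (rule Bochner_Integration.integrable_bound[OF ii2 m]) (rule AE_I2, rule le)
  have "\<bar>LINT u:A|lborel. g u\<bar> \<le> (\<integral>x. B * indicator A x \<partial>lborel)"
    unfolding set_lebesgue_integral_def
    apply (rule integral_abs_bound_integral)
    using si ii2 le B0 unfolding set_integrable_def by (auto simp: abs_mult)
  also have "\<dots> = B * measure lborel A" using A fin by (simp add: less_top)
  finally show "\<bar>LINT u:A|lborel. g u\<bar> \<le> B * measure lborel A" .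
qed

lemma incr_bound:
  fixes g :: "real \<Rightarrow> real"
  assumes g: "g \<in> borel_measurable borel" and B: "\<And>u. \<bar>g u\<bar> \<le> B" and ab: "0 \<le> a" "a \<le> b"
  shows "\<bar>(LINT u:{0..b}|lborel. g u) - (LINT u:{0..a}|lborel. g u)\<bar> \<le> B * (b - a)"
proof -
  have U: "{0..b} = {0..a} \<union> {a<..b}" using ab by auto
  have s1: "set_integrable lborel {0..a} g" by (rule set_int_bound(1)[OF g B]) (use ab in auto)
  have s2: "set_integrable lborel {a<..b} g" by (rule set_int_bound(1)[OF g B]) (use ab in auto)
  have "(LINT u:{0..b}|lborel. g u) = (LINT u:{0..a}|lborel. g u) + (LINT u:{a<..b}|lborel. g u)"
    unfolding U by (rule set_integral_Un[OF _ s1 s2]) auto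
  moreover have "\<bar>LINT u:{a<..b}|lborel. g u\<bar> \<le> B * measure lborel {a<..b}"
    by (rule set_int_bound(2)[OF g B]) (use ab in auto)
  ultimately show ?thesis using ab by simp
qed

lemma right_seq:
  fixes g :: "real \<Rightarrow> 'e::topological_space"
  assumes c: "continuous (at_right u) g" and xk: "\<And>k. x k \<ge> u" and lim: "x \<longlonglongrightarrow> u"
  shows "(\<lambda>k. g (x k)) \<longlonglongrightarrow> g u"
proof (rule topological_tendstoI)
  fix S assume S: "open S" "g u \<in> S"
  have "(g \<longlongrightarrow> g u) (at_right u)" using c by (simp add: continuous_within)
  hence "eventually (\<lambda>y. g y \<in> S) (at_right u)" using S by (simp add: tendsto_def)
  then obtain b where b: "b > u" "\<And>y. y > u \<Longrightarrow> y < b \<Longrightarrow> g y \<in> S"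
    using eventually_at_right[of u "u+1" "\<lambda>y. g y \<in> S"] by auto
  have "eventually (\<lambda>k. x k < b) sequentially"
    using lim b(1) by (simp add: order_tendstoD(2))
  thus "eventually (\<lambda>k. g (x k) \<in> S) sequentially"
  proof (rule eventually_mono)
    fix k assume "x k < b"
    thus "g (x k) \<in> S" using b(2)[of "x k"] xk[of k] S(2)
      by (cases "x k = u") auto
  qed
qed

lemma dyadic_lim:
  fixes u :: real assumes "u \<ge> 0"
  shows "(\<lambda>k::nat. real_of_int \<lceil>2^k * u\<rceil> / 2^k) \<longlonglongrightarrow> u"
    "\<And>k::nat. real_of_int \<lceil>2^k * u\<rceil> / 2^k \<ge> u"
proof -
  have lo: "real_of_int \<lceil>2^k * u\<rceil> / 2^k \<ge> u" for k :: nat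
  proof -
    have p: "(0::real) < 2^k" by simp
    have "u * 2^k \<le> real_of_int \<lceil>2^k * u\<rceil>" using le_of_int_ceiling[of "2^k * u"] by (simp only: mult.commute)
    thus ?thesis using p by (simp only: pos_le_divide_eq)
  qed
  have hi: "real_of_int \<lceil>2^k * u\<rceil> / 2^k \<le> u + (1/2)^k" for k :: nat
  proof -
    have p: "(0::real) < 2^k" by simp
    have "real_of_int \<lceil>2^k * u\<rceil> \<le> 2^k * u + 1" by linarith
    also have "\<dots> = (u + (1/2)^k) * 2^k" by (simp add: algebra_simps power_one_over)
    finally show ?thesis using p by (simp only: pos_divide_le_eq)
  qed
  have "(\<lambda>k::nat. u + (1/2::real)^k) \<longlonglongrightarrow> u + 0"
    by (intro tendsto_add tendsto_const LIMSEQ_power_zero) auto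
  hence lim: "(\<lambda>k::nat. u + (1/2::real)^k) \<longlonglongrightarrow> u" by simp
  show "(\<lambda>k::nat. real_of_int \<lceil>2^k * u\<rceil> / 2^k) \<longlonglongrightarrow> u"
  proof (rule tendsto_sandwich[where f="\<lambda>_. u" and h="\<lambda>k. u + (1/2)^k"])
    show "eventually (\<lambda>k. u \<le> real_of_int \<lceil>2^k * u\<rceil> / 2^k) sequentially"
      using lo by (intro always_eventually allI) 
    show "eventually (\<lambda>k. real_of_int \<lceil>2^k * u\<rceil> / 2^k \<le> u + (1/2)^k) sequentially"
      using hi by (intro always_eventually allI)
    show "(\<lambda>_. u) \<longlonglongrightarrow> u" by (rule tendsto_const)
    show "(\<lambda>k. u + (1/2)^k) \<longlonglongrightarrow> u" by (rule lim)
  qed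
  show "\<And>k::nat. real_of_int \<lceil>2^k * u\<rceil> / 2^k \<ge> u" by (rule lo)
qed

lemma joint_meas:
  fixes f :: "'e::metric_space \<Rightarrow> real"
  assumes markov: "rc_markov_process M P X" and fc: "continuous_on UNIV f"
  shows "(\<lambda>z. f (X (fst z) (max 0 (snd z)))) \<in> borel_measurable (M \<Otimes>\<^sub>M (lborel::real measure))"
proof (rule borel_measurable_LIMSEQ_real)
  have Xm: "\<And>t. t \<ge> 0 \<Longrightarrow> (\<lambda>\<omega>. X \<omega> t) \<in> measurable M borel"
    and Xc: "\<And>\<omega> t. \<omega> \<in> space M \<Longrightarrow> t \<ge> 0 \<Longrightarrow> continuous (at_right t) (X \<omega>)"
    using markov unfolding rc_markov_process_def by auto
  have fm: "f \<in> borel_measurable borel" by (rule borel_measurable_continuous_onI[OF fc])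
  fix k :: nat
  show "(\<lambda>z. f (X (fst z) (max 0 (real_of_int \<lceil>(2::real)^k * snd z\<rceil> / 2^k)))) \<in> borel_measurable (M \<Otimes>\<^sub>M (lborel::real measure))"
  proof (rule measurable_compose_countable[where f="\<lambda>i z. f (X (fst z) (max 0 (real_of_int i / 2^k)))"
        and g="\<lambda>z. \<lceil>2^k * (snd z :: real)\<rceil>"])
    fix i :: int
    have "(\<lambda>\<omega>. X \<omega> (max 0 (real_of_int i / 2^k))) \<in> measurable M borel" by (rule Xm) simp
    hence "(\<lambda>\<omega>. f (X \<omega> (max 0 (real_of_int i / 2^k)))) \<in> borel_measurable M"
      using fm by (rule measurable_compose)
    thus "(\<lambda>z. f (X (fst z) (max 0 (real_of_int i / 2^k)))) \<in> borel_measurable (M \<Otimes>\<^sub>M (lborel::real measure))"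
      by (rule measurable_compose[OF measurable_fst])
  next
    show "(\<lambda>z. \<lceil>(2::real)^k * snd z\<rceil>) \<in> measurable (M \<Otimes>\<^sub>M (lborel::real measure)) (count_space UNIV)"
      by measurable
  qed
next
  have Xc: "\<And>\<omega> t. \<omega> \<in> space M \<Longrightarrow> t \<ge> 0 \<Longrightarrow> continuous (at_right t) (X \<omega>)"
    using markov unfolding rc_markov_process_def by auto
  fix z assume z: "z \<in> space (M \<Otimes>\<^sub>M (lborel::real measure))"
  obtain \<omega> u where zz: "z = (\<omega>, u)" and w: "\<omega> \<in> space M" using z by (cases z) (auto simp: space_pair_measure)
  show "(\<lambda>k. f (X (fst z) (max 0 (real_of_int \<lceil>(2::real)^k * snd z\<rceil> / 2^k)))) \<longlonglongrightarrow> f (X (fst z) (max 0 (snd z)))"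
  proof (cases "u \<ge> 0")
    case True
    have "(\<lambda>k. X \<omega> (real_of_int \<lceil>2^k * u\<rceil> / 2^k)) \<longlonglongrightarrow> X \<omega> u"
      by (rule right_seq[OF Xc[OF w True] dyadic_lim(2)[OF True] dyadic_lim(1)[OF True]])
    hence "(\<lambda>k. f (X \<omega> (real_of_int \<lceil>2^k * u\<rceil> / 2^k))) \<longlonglongrightarrow> f (X \<omega> u)"
      by (rule isCont_tendsto_compose[rotated]) (use fc in \<open>simp add: continuous_on_eq_continuous_at\<close>)
    moreover have "\<And>k::nat. max 0 (real_of_int \<lceil>2^k * u\<rceil> / 2^k) = real_of_int \<lceil>2^k * u\<rceil> / 2^k"
      using dyadic_lim(2)[OF True] True by (meson max.absorb2 order_trans)
    ultimately show ?thesis using True zz by simp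
  next
    case False
    have "\<And>k::nat. max 0 (real_of_int \<lceil>2^k * u\<rceil> / 2^k) = 0"
    proof -
      fix k :: nat
      have "2^k * u < 0" using False by (simp add: mult_pos_neg)
      hence "\<lceil>2^k * u\<rceil> \<le> 0" by linarith
      thus "max 0 (real_of_int \<lceil>2^k * u\<rceil> / 2^k) = 0" by (simp add: divide_nonpos_pos)
    qed
    thus ?thesis using False zz by simp
  qed
qed
lemma avg_eq:
  "time_avg X f \<omega> s = (1/s) * (\<integral>u. indicator {0..s} u * f (X \<omega> (max 0 u)) \<partial>lborel)"
  unfolding time_avg_def set_lebesgue_integral_def
  by (intro arg_cong[where f="\<lambda>x. (1/s) * x"] Bochner_Integration.integral_cong)
     (auto simp: indicator_def max_def)

lemma avg_meas:
  fixes f :: "'e::metric_space \<Rightarrow> real"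
  assumes markov: "rc_markov_process M P X" and fc: "continuous_on UNIV f"
  shows "(\<lambda>\<omega>. time_avg X f \<omega> s) \<in> borel_measurable M"
proof -
  have J: "(\<lambda>z. f (X (fst z) (max 0 (snd z)))) \<in> borel_measurable (M \<Otimes>\<^sub>M (lborel::real measure))"
    by (rule joint_meas[OF markov fc])
  have "case_prod (\<lambda>\<omega> u. indicator {0..s} u * f (X \<omega> (max 0 u))) \<in> borel_measurable (M \<Otimes>\<^sub>M (lborel::real measure))"
  proof -
    have "(\<lambda>z. indicator {0..s} (snd z) * f (X (fst z) (max 0 (snd z)))) \<in> borel_measurable (M \<Otimes>\<^sub>M (lborel::real measure))"
    proof (rule borel_measurable_times[OF _ J])
      have "indicator {0..s} \<in> borel_measurable (lborel::real measure)" by simp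
      thus "(\<lambda>z. indicator {0..s} (snd z) :: real) \<in> borel_measurable (M \<Otimes>\<^sub>M (lborel::real measure))"
        by (rule measurable_compose[OF measurable_snd])
    qed
    thus ?thesis by (simp add: case_prod_beta')
  qed
  hence "(\<lambda>\<omega>. \<integral>u. indicator {0..s} u * f (X \<omega> (max 0 u)) \<partial>lborel) \<in> borel_measurable M"
    by (rule lborel.borel_measurable_lebesgue_integral)
  hence "(\<lambda>\<omega>. (1/s) * (\<integral>u. indicator {0..s} u * f (X \<omega> (max 0 u)) \<partial>lborel)) \<in> borel_measurable M"
    by (rule borel_measurable_times[OF borel_measurable_const])
  thus ?thesis by (simp only: avg_eq)
qed

lemma key_ineq:
  fixes Fs Fn s n B \<epsilon> :: real
  assumes "\<bar>Fs - Fn\<bar> \<le> B" "\<bar>Fn\<bar> \<le> B * n" "n > 0" "s \<ge> n" "s < n + 1" "n \<ge> 4*B/\<epsilon>" "B > 0" "\<epsilon> > 0"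
  shows "\<bar>Fs/s - Fn/n\<bar> \<le> \<epsilon>/2"
proof -
  have s0: "s > 0" using assms by linarith
  have e1: "Fs/s - Fn/n = (Fs - Fn)/s + (Fn/n) * ((n - s)/s)"
    using s0 assms(3) by (simp add: diff_divide_distrib right_diff_distrib)
  have b1: "\<bar>(Fs - Fn)/s\<bar> \<le> B/n"
  proof -
    have "\<bar>(Fs - Fn)/s\<bar> = \<bar>Fs - Fn\<bar>/s" using s0 by simp
    also have "\<dots> \<le> B/s" using assms(1) s0 by (simp add: divide_right_mono)
    also have "\<dots> \<le> B/n" using assms by (simp add: frac_le)
    finally show ?thesis .
  qed
  have b2: "\<bar>(Fn/n) * ((n - s)/s)\<bar> \<le> B/n"
  proof -
    have "\<bar>Fn/n\<bar> \<le> B" using assms(2,3) by (simp add: divide_le_eq)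
    moreover have "\<bar>(n - s)/s\<bar> \<le> 1/n"
    proof -
      have "\<bar>(n - s)/s\<bar> = (s - n)/s" using s0 assms(4) by simp
      also have "\<dots> \<le> 1/s" using assms(5) s0 by (simp add: divide_right_mono)
      also have "\<dots> \<le> 1/n" using assms by (simp add: frac_le)
      finally show ?thesis .
    qed
    ultimately have "\<bar>Fn/n\<bar> * \<bar>(n - s)/s\<bar> \<le> B * (1/n)"
      using assms(7) by (intro mult_mono) auto
    thus ?thesis by (simp add: abs_mult)
  qed
  have "2*B/n \<le> \<epsilon>/2"
  proof -
    have "4*B \<le> n * \<epsilon>" using assms(6,8) by (simp add: divide_le_eq)
    hence "2*B \<le> \<epsilon>/2 * n" by (simp add: algebra_simps)
    thus ?thesis using assms(3) by (simp add: divide_le_eq)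
  qed
  thus ?thesis using e1 b1 b2 by linarith
qed

theorem lemma2p24:
  fixes M :: "'w measure" and P :: "'e::metric_space \<Rightarrow> 'w measure"
    and X :: "'w \<Rightarrow> real \<Rightarrow> 'e" and \<mu> :: "'e measure" and f :: "'e \<Rightarrow> real"
  assumes loc_compact: "locally_compact_space (euclidean :: 'e topology)"
    and separable: "separable_space (euclidean :: 'e topology)"
    and balls_compact: "\<And>(x::'e) r. compact (cball x r)"
    and markov: "rc_markov_process M P X"
    and feller: "weak_feller P X"
    and ergodic: "ergodic_with P X \<mu>"
    and f_cont: "continuous_on UNIV f" and f_bdd: "bounded (range f)"
    and L: "\<And>\<delta> \<epsilon> K. \<delta> > 0 \<Longrightarrow> \<epsilon> > 0 \<Longrightarrow> compact K \<Longrightarrow>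
              \<exists>N>0. \<exists>p>0. \<forall>n::nat. \<forall>x\<in>K. real n \<ge> N \<longrightarrow>
                measure (P x) {\<omega>\<in>space (P x). \<bar>time_avg X f \<omega> (real n * \<delta>) - (\<integral>y. f y \<partial>\<mu>)\<bar> > \<epsilon>}
                  \<le> exp (- p * (real n * \<delta>))"
  shows "\<And>\<epsilon> K. \<epsilon> > 0 \<Longrightarrow> compact K \<Longrightarrow>
           \<exists>S>0. \<exists>C>0. \<exists>\<rho>>0. \<forall>t\<ge>S. \<forall>x\<in>K.
             measure (P x) {\<omega>\<in>space (P x).
                (SUP s\<in>{t..}. \<bar>time_avg X f \<omega> s - (\<integral>y. f y \<partial>\<mu>)\<bar>) > \<epsilon>}
               \<le> C * exp (- \<rho> * t)"
proof -
  fix \<epsilon> :: real and K :: "'e set"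
  assume e: "\<epsilon> > 0" and K: "compact K"
  define m where "m = (\<integral>y. f y \<partial>\<mu>)"
  obtain B where B0: "B > 0" and B: "\<And>y. \<bar>f y\<bar> \<le> B"
    using f_bdd unfolding bounded_pos by auto
  obtain N p where N: "N > 0" and p: "p > 0" and NP: "\<forall>n::nat. \<forall>x\<in>K. real n \<ge> N \<longrightarrow>
                measure (P x) {\<omega>\<in>space (P x). \<bar>time_avg X f \<omega> (real n * 1) - m\<bar> > \<epsilon>/2}
                  \<le> exp (- p * (real n * 1))"
    using L[of 1 "\<epsilon>/2" K] e K unfolding m_def by auto
  have Pp: "\<And>x. prob_space (P x)" and Ps: "\<And>x. sets (P x) = sets M" and Psp: "\<And>x. space (P x) = space M"
    using markov unfolding rc_markov_process_def by auto
  have J: "(\<lambda>z. f (X (fst z) (max 0 (snd z)))) \<in> borel_measurable (M \<Otimes>\<^sub>M (lborel::real measure))"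
    by (rule joint_meas[OF markov f_cont])
  define g where "g \<omega> u = f (X \<omega> (max 0 u))" for \<omega> u
  have gm: "\<And>\<omega>. \<omega> \<in> space M \<Longrightarrow> g \<omega> \<in> borel_measurable borel"
  proof -
    fix \<omega> assume "\<omega> \<in> space M"
    from measurable_Pair2[OF J this] show "g \<omega> \<in> borel_measurable borel" unfolding g_def by simp
  qed
  have gB: "\<And>\<omega> u. \<bar>g \<omega> u\<bar> \<le> B" unfolding g_def using B by simp
  have tav: "time_avg X f \<omega> s = (1/s) * (LINT u:{0..s}|lborel. g \<omega> u)" for \<omega> s
    unfolding time_avg_def g_def
    by (rule arg_cong[where f="\<lambda>x. (1/s) * x"], rule set_lebesgue_integral_cong) auto
  have Fb: "\<And>\<omega> s. \<omega> \<in> space M \<Longrightarrow> s \<ge> 0 \<Longrightarrow> \<bar>LINT u:{0..s}|lborel. g \<omega> u\<bar> \<le> B * s"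
  proof -
    fix \<omega> s assume "\<omega> \<in> space M" "(s::real) \<ge> 0"
    thus "\<bar>LINT u:{0..s}|lborel. g \<omega> u\<bar> \<le> B * s"
      using set_int_bound(2)[OF gm gB, of \<omega> "{0..s}"] by simp
  qed
  define E where "E n = {\<omega>\<in>space M. \<bar>time_avg X f \<omega> (real n) - m\<bar> > \<epsilon>/2}" for n :: nat
  have Em: "\<And>n. E n \<in> sets M"
  proof -
    fix n
    have "(\<lambda>\<omega>. time_avg X f \<omega> (real n)) \<in> borel_measurable M" by (rule avg_meas[OF markov f_cont])
    thus "E n \<in> sets M" unfolding E_def by measurable
  qed
  have EN: "\<And>n x. x \<in> K \<Longrightarrow> real n \<ge> N \<Longrightarrow> measure (P x) (E n) \<le> exp (- p * real n)"
    using NP unfolding E_def Psp by simp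
  define S where "S = max N (4*B/\<epsilon>) + 1"
  define C where "C = exp p / (1 - exp (-p))"
  have ep1: "exp (-p) < 1" using p by simp
  have C0: "C > 0" unfolding C_def using ep1 by simp
  have S0: "S > 0" unfolding S_def using N by simp
  have "\<forall>t\<ge>S. \<forall>x\<in>K. measure (P x) {\<omega>\<in>space (P x).
                (SUP s\<in>{t..}. \<bar>time_avg X f \<omega> s - m\<bar>) > \<epsilon>} \<le> C * exp (- p * t)"
  proof (intro allI impI ballI)
    fix t x assume tS: "S \<le> t" and x: "x \<in> K"
    define n0 where "n0 = nat \<lfloor>t\<rfloor>"
    have t1: "t - 1 \<ge> max N (4*B/\<epsilon>)" using tS unfolding S_def by linarith
    have n0t: "real n0 \<ge> t - 1" unfolding n0_def using t1 N by linarith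
    define T where "T = {\<omega>\<in>space (P x). (SUP s\<in>{t..}. \<bar>time_avg X f \<omega> s - m\<bar>) > \<epsilon>}"
    have sub: "T \<subseteq> (\<Union>i. E (i + n0))"
    proof
      fix \<omega> assume w: "\<omega> \<in> T"
      hence wM: "\<omega> \<in> space M" unfolding T_def Psp by simp
      have bdd: "bdd_above ((\<lambda>s. \<bar>time_avg X f \<omega> s - m\<bar>) ` {t..})"
      proof (rule bdd_aboveI2)
        fix s assume "s \<in> {t..}"
        hence s0: "s > 0" using t1 N by auto
        have "\<bar>time_avg X f \<omega> s\<bar> \<le> B"
          using Fb[OF wM, of s] s0 unfolding tav by (simp add: abs_mult divide_le_eq mult.commute)
        thus "\<bar>time_avg X f \<omega> s - m\<bar> \<le> B + \<bar>m\<bar>" by linarith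
      qed
      obtain s where s: "s \<ge> t" and big: "\<bar>time_avg X f \<omega> s - m\<bar> > \<epsilon>"
        using w bdd unfolding T_def by (auto simp: less_cSUP_iff)
      define n where "n = nat \<lfloor>s\<rfloor>"
      have sn: "real n \<le> s" "s < real n + 1" "real n \<ge> t - 1" unfolding n_def using s t1 N by linarith+
      have npos: "real n > 0" and n4: "real n \<ge> 4*B/\<epsilon>" and nN: "real n \<ge> N" using sn t1 N by auto
      have nn0: "n \<ge> n0" unfolding n_def n0_def using s by (simp add: floor_mono nat_mono)
      have "\<bar>time_avg X f \<omega> s - time_avg X f \<omega> (real n)\<bar> \<le> \<epsilon>/2"
      proof -
        have i1: "\<bar>(LINT u:{0..s}|lborel. g \<omega> u) - (LINT u:{0..real n}|lborel. g \<omega> u)\<bar> \<le> B"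
        proof -
          have "\<bar>(LINT u:{0..s}|lborel. g \<omega> u) - (LINT u:{0..real n}|lborel. g \<omega> u)\<bar> \<le> B * (s - real n)"
            by (rule incr_bound[OF gm[OF wM] gB]) (use sn in auto)
          also have "\<dots> \<le> B * 1" using sn B0 by (intro mult_left_mono) auto
          finally show ?thesis by simp
        qed
        have i2: "\<bar>LINT u:{0..real n}|lborel. g \<omega> u\<bar> \<le> B * real n" using Fb[OF wM, of "real n"] by simp
        from key_ineq[OF i1 i2 npos sn(1) sn(2) n4 B0 e] show ?thesis
          unfolding tav by simp
      qed
      hence "\<bar>time_avg X f \<omega> (real n) - m\<bar> > \<epsilon>/2" using big by linarith
      hence "\<omega> \<in> E n" unfolding E_def using wM by simp
      moreover have "n = (n - n0) + n0" using nn0 by simp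
      ultimately show "\<omega> \<in> (\<Union>i. E (i + n0))" by (metis UNIV_I UN_I)
    qed
    interpret PX: prob_space "P x" by (rule Pp)
    have Em': "\<And>i. E (i + n0) \<in> sets (P x)" using Em Ps by simp
    have Um: "(\<Union>i. E (i + n0)) \<in> sets (P x)" using Em' by auto
    have geo: "(\<lambda>i. exp (-p) ^ i) sums (1 / (1 - exp (-p)))"
      by (rule geometric_sums) (use ep1 in simp)
    have eqi: "\<And>i. exp (- p * real (i + n0)) = exp (- p * real n0) * exp (-p) ^ i"
      by (simp add: exp_of_nat_mult[symmetric] exp_add[symmetric] algebra_simps)
    have sums: "(\<lambda>i. exp (- p * real (i + n0))) sums (exp (- p * real n0) * (1 / (1 - exp (-p))))"
      unfolding eqi by (rule sums_mult[OF geo])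
    have mi: "\<And>i. measure (P x) (E (i + n0)) \<le> exp (- p * real (i + n0))"
    proof -
      fix i have "real (i + n0) \<ge> N" using n0t t1 by simp
      thus "measure (P x) (E (i + n0)) \<le> exp (- p * real (i + n0))" by (rule EN[OF x])
    qed
    have summ: "summable (\<lambda>i. measure (P x) (E (i + n0)))"
      by (rule summable_comparison_test[where g="\<lambda>i. exp (- p * real (i + n0))"])
         (use mi sums_summable[OF sums] in auto)
    have "measure (P x) T \<le> measure (P x) (\<Union>i. E (i + n0))"
    proof (cases "T \<in> sets (P x)")
      case True thus ?thesis using sub Um by (intro PX.finite_measure_mono)
    next
      case False thus ?thesis by (simp add: measure_notin_sets)
    qed
    also have "\<dots> \<le> (\<Sum>i. measure (P x) (E (i + n0)))"
      by (rule PX.finite_measure_subadditive_countably) (use Em' summ in auto)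
    also have "\<dots> \<le> (\<Sum>i. exp (- p * real (i + n0)))"
      by (rule suminf_le[OF mi summ sums_summable[OF sums]])
    also have "\<dots> = exp (- p * real n0) * (1 / (1 - exp (-p)))" using sums by (rule sums_unique[symmetric])
    also have "\<dots> \<le> exp (- p * (t - 1)) * (1 / (1 - exp (-p)))"
      using n0t p ep1 by (intro mult_right_mono) auto
    also have "\<dots> = C * exp (- p * t)" unfolding C_def by (simp add: exp_diff exp_minus field_simps exp_add[symmetric])
    finally show "measure (P x) {\<omega>\<in>space (P x). (SUP s\<in>{t..}. \<bar>time_avg X f \<omega> s - m\<bar>) > \<epsilon>} \<le> C * exp (- p * t)"
      unfolding T_def .
  qed
  thus "\<exists>S>0. \<exists>C>0. \<exists>\<rho>>0. \<forall>t\<ge>S. \<forall>x\<in>K.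
             measure (P x) {\<omega>\<in>space (P x).
                (SUP s\<in>{t..}. \<bar>time_avg X f \<omega> s - (\<integral>y. f y \<partial>\<mu>)\<bar>) > \<epsilon>}
               \<le> C * exp (- \<rho> * t)"
    using S0 C0 p unfolding m_def by blast
qed

end
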